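(* Let $F$ be a positive integer and let $p$ be the least positive integer such that $p\nmid F$. Then $$\min\{\mathrm{g}(S)\mid S\in\mathrm{Sat}(F)\}=F-\left\lfloor \frac{F}{p}\right\rfloor.$$
   Context: A numerical semigroup is a subset $S\subseteq\mathbb{N}$ closed under addition, containing $0$, with $\mathbb{N}\setminus S$ finite. Its genus $\mathrm{g}(S)$ is the cardinality of $\mathbb{N}\setminus S$, and its Frobenius number $\mathrm{F}(S)$ is the largest integer not in $S$. For $A\subseteq\mathbb{N}$ and $a\in A$, let $\mathrm{d}_A(a)=\gcd\{x\in A\mid x\le a\}$. A numerical semigroup $S$ is saturated if $s+\mathrm{d}_S(s)\in S$ for all $s\in S\setminus\{0\}$. For a positive integer $F$, $\mathrm{Sat}(F)$ denotes the set of all saturated numerical semigroups $S$ with $\mathrm{F}(S)=F$. *)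

theory Defs
  imports Main
begin

definition numerical_semigroup :: "nat set \<Rightarrow> bool" where
  "numerical_semigroup S \<longleftrightarrow> 0 \<in> S \<and> (\<forall>x\<in>S. \<forall>y\<in>S. x + y \<in> S) \<and> finite (UNIV - S)"

definition genus :: "nat set \<Rightarrow> nat" where
  "genus S = card (UNIV - S)"

(* Frobenius number: largest integer not in S (only meaningful when S \<noteq> UNIV) *)
definition frobenius :: "nat set \<Rightarrow> nat" where
  "frobenius S = Max (UNIV - S)"

definition dA :: "nat set \<Rightarrow> nat \<Rightarrow> nat" where
  "dA A a = Gcd {x \<in> A. x \<le> a}"

definition saturated :: "nat set \<Rightarrow> bool" where
  "saturated S \<longleftrightarrow> numerical_semigroup S \<and> (\<forall>s \<in> S - {0}. s + dA S s \<in> S)"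

definition Sat :: "nat \<Rightarrow> nat set set" where
  "Sat F = {S. saturated S \<and> S \<noteq> UNIV \<and> frobenius S = F}"

end

theory Submission
  imports Defs
begin

lemma card_mults:
  fixes d F :: nat
  assumes "d > 0"
  shows "card {x \<in> {1..F}. d dvd x} = F div d"
proof -
  have "{x \<in> {1..F}. d dvd x} = (\<lambda>i. d * i) ` {1..F div d}"
  proof (rule set_eqI, rule iffI)
    fix x assume x: "x \<in> {x \<in> {1..F}. d dvd x}"
    then obtain k where k: "x = d * k" by blast
    have k1: "1 \<le> d*k" "d * k \<le> F" using x k by auto
    have "k \<noteq> 0" using k1 by (intro notI) simp
    hence "k \<ge> 1" by simp
    moreover have "k \<le> F div d"
    proof -
      have "d * k div d \<le> F div d" using k1(2) by (rule div_le_mono)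
      thus ?thesis using assms by simp
    qed
    ultimately have "k \<in> {1..F div d}" by simp
    thus "x \<in> (\<lambda>i. d * i) ` {1..F div d}" using k by (rule rev_image_eqI)
  next
    fix x assume "x \<in> (\<lambda>i. d * i) ` {1..F div d}"
    then obtain k where kk: "k \<in> {1..F div d}" and k: "x = d*k" by blast
    have "d * k \<le> d * (F div d)" using kk by simp
    also have "\<dots> \<le> F" by simp
    finally have "x \<le> F" using k by simp
    moreover have "1 \<le> x" using kk assms k by simp
    ultimately show "x \<in> {x \<in> {1..F}. d dvd x}" using k by simp
  qed
  moreover have "inj_on (\<lambda>i. d * i) {1..F div d}" using assms by (auto simp: inj_on_def)
  ultimately show ?thesis by (simp add: card_image)
qed

lemma lower:
  fixes F p :: nat
  assumes p: "\<And>d. d > 0 \<Longrightarrow> \<not> d dvd F \<Longrightarrow> p \<le> d" and pp: "p > 0"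
    and S: "S \<in> Sat F"
  shows "F - F div p \<le> genus S"
proof -
  have sat: "saturated S" and ne: "S \<noteq> UNIV" and fr: "frobenius S = F" using S by (auto simp: Sat_def)
  have ns: "numerical_semigroup S" using sat by (simp add: saturated_def)
  have z: "0 \<in> S" and fin: "finite (UNIV - S)" using ns by (auto simp: numerical_semigroup_def)
  have "UNIV - S \<noteq> {}" using ne by auto
  hence "Max (UNIV - S) \<in> UNIV - S" using fin by (intro Max_in)
  hence FnS: "F \<notin> S" using fr unfolding frobenius_def by simp
  have big: "x \<in> S" if "x > F" for x
  proof (rule ccontr)
    assume "x \<notin> S"
    hence "x \<le> Max (UNIV - S)" using fin by (intro Max_ge) auto
    thus False using that fr by (simp add: frobenius_def)
  qed
  have compl: "UNIV - S = {1..F} - ({1..F} \<inter> S)"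
  proof (rule set_eqI)
    fix x show "x \<in> UNIV - S \<longleftrightarrow> x \<in> {1..F} - ({1..F} \<inter> S)"
    proof (cases "x = 0")
      case True thus ?thesis using z by simp
    next
      case False thus ?thesis using big[of x] by (cases "x > F") auto
    qed
  qed
  have g: "genus S = F - card ({1..F} \<inter> S)"
    unfolding genus_def compl by (subst card_Diff_subset) auto
  have "card ({1..F} \<inter> S) \<le> F div p"
  proof (cases "{1..F} \<inter> S = {}")
    case True then show ?thesis by simp
  next
    case False
    define m where "m = Max ({1..F} \<inter> S)"
    have mS: "m \<in> {1..F} \<inter> S" unfolding m_def using False by (intro Max_in) auto
    have mmax: "x \<le> m" if "x \<in> {1..F} \<inter> S" for x unfolding m_def using that by (intro Max_ge) auto
    have mF: "m < F" using mS FnS by (cases "m = F") auto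
    define d where "d = dA S m"
    have dd: "d dvd x" if "x \<in> S" "x \<le> m" for x
      unfolding d_def dA_def by (rule Gcd_dvd) (use that in auto)
    have d0: "d > 0"
    proof (rule ccontr)
      assume "\<not> d > 0" hence "d = 0" by simp
      hence "m = 0" using dd[of m] mS by auto
      thus False using mS by auto
    qed
    have md: "m + d \<in> S" using sat mS unfolding saturated_def d_def by auto
    have ndF: "\<not> d dvd F"
    proof
      assume "d dvd F"
      moreover have "d dvd m" using dd mS by auto
      ultimately have "d dvd F - m" by (simp add: dvd_diff_nat)
      hence "d \<le> F - m" using mF by (intro dvd_imp_le) auto
      hence "m + d \<le> F" using mF by linarith
      moreover have "m + d \<noteq> F" using md FnS by auto
      ultimately have "m + d \<in> {1..F} \<inter> S" using md mS by auto
      from mmax[OF this] d0 show False by simp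
    qed
    have pd: "p \<le> d" using p d0 ndF by blast
    have "{1..F} \<inter> S \<subseteq> {x \<in> {1..F}. d dvd x}"
    proof
      fix x assume x: "x \<in> {1..F} \<inter> S"
      have "d dvd x" using dd[of x] mmax[OF x] x by blast
      thus "x \<in> {x \<in> {1..F}. d dvd x}" using x by blast
    qed
    hence "card ({1..F} \<inter> S) \<le> card {x \<in> {1..F}. d dvd x}" by (intro card_mono) auto
    also have "\<dots> = F div d" using card_mults d0 by simp
    also have "\<dots> \<le> F div p" using pd pp by (simp add: div_le_mono2)
    finally show ?thesis .
  qed
  thus ?thesis using g by simp
qed

lemma upper:
  fixes F p :: nat
  assumes pF: "\<not> p dvd F" and pp: "p > 0" and F0: "F > 0"
  defines "S0 \<equiv> {x. p dvd x \<and> x < F} \<union> {x. x > F}"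
  shows "S0 \<in> Sat F" "genus S0 = F - F div p"
proof -
  have FnS: "F \<notin> S0" unfolding S0_def by auto
  have compl: "UNIV - S0 = {1..F} - {x \<in> {1..F}. p dvd x}"
  proof (rule set_eqI)
    fix x show "x \<in> UNIV - S0 \<longleftrightarrow> x \<in> {1..F} - {x \<in> {1..F}. p dvd x}"
    proof (cases "x = 0")
      case True thus ?thesis using F0 unfolding S0_def by simp
    next
      case False
      show ?thesis
      proof (cases "x = F")
        case True thus ?thesis using pF F0 unfolding S0_def by simp
      next
        case False thus ?thesis using \<open>x \<noteq> 0\<close> unfolding S0_def by (cases "x > F") auto
      qed
    qed
  qed
  show "genus S0 = F - F div p"
  proof -
    have "card ({1..F} - {x \<in> {1..F}. p dvd x}) = card {1..F} - card {x \<in> {1..F}. p dvd x}"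
      by (rule card_Diff_subset) auto
    also have "\<dots> = F - F div p" using card_mults[OF pp, of F] by simp
    finally show ?thesis unfolding genus_def compl .
  qed
  have fin: "finite (UNIV - S0)" unfolding compl by auto
  have ns: "numerical_semigroup S0"
    unfolding numerical_semigroup_def
  proof (intro conjI ballI fin)
    show "0 \<in> S0" unfolding S0_def using F0 by auto
  next
    fix x y assume "x \<in> S0" "y \<in> S0"
    thus "x + y \<in> S0" unfolding S0_def using pF
      by (auto simp: not_less) (metis dvd_add le_neq_implies_less)
  qed
  have mem: "x \<in> S0" if "p dvd x" "x \<noteq> F" for x
    using that unfolding S0_def by (auto simp: nat_neq_iff)
  have sat: "saturated S0"
    unfolding saturated_def
  proof (intro conjI ns ballI)
    fix s assume s: "s \<in> S0 - {0}"
    show "s + dA S0 s \<in> S0"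
    proof (cases "s > F")
      case True thus ?thesis unfolding S0_def by auto
    next
      case False
      hence ps: "p dvd s" "s < F" using s unfolding S0_def by auto
      have "p dvd dA S0 s" unfolding dA_def
        by (rule Gcd_greatest) (use ps in \<open>auto simp: S0_def\<close>)
      hence "p dvd s + dA S0 s" using ps by simp
      moreover have "s + dA S0 s \<noteq> F" using pF \<open>p dvd s + dA S0 s\<close> by auto
      ultimately show ?thesis using mem by blast
    qed
  qed
  have "frobenius S0 = F" unfolding frobenius_def
  proof (rule Max_eqI[OF fin])
    fix y assume "y \<in> UNIV - S0" thus "y \<le> F" unfolding S0_def by auto
  next
    show "F \<in> UNIV - S0" using FnS by auto
  qed
  thus "S0 \<in> Sat F" using sat FnS unfolding Sat_def by auto
qed

theorem corollary32:
  fixes F p :: nat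
  assumes "F > 0"
    and "p = (LEAST q. q > 0 \<and> \<not> q dvd F)"
  shows "Min (genus ` Sat F) = F - F div p"
proof -
  have ex: "F + 1 > 0 \<and> \<not> (F + 1) dvd F" using assms(1)
    by (auto dest: dvd_imp_le)
  have pp: "p > 0 \<and> \<not> p dvd F" unfolding assms(2) by (rule LeastI[of _ "F+1"]) (rule ex)
  have pl: "p \<le> d" if "d > 0" "\<not> d dvd F" for d
    unfolding assms(2) by (rule Least_le) (use that in auto)
  define S0 where "S0 = {x. p dvd x \<and> x < F} \<union> {x. x > F}"
  have u: "S0 \<in> Sat F" "genus S0 = F - F div p"
    using upper[of p F] pp assms(1) unfolding S0_def by auto
  have gb: "genus S \<le> F" if "S \<in> Sat F" for S
  proof -
    have "UNIV - S \<subseteq> {..F}" using that unfolding Sat_def saturated_def numerical_semigroup_def frobenius_def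
      by (auto intro: Max_ge)
    hence "card (UNIV - S) \<le> card {..F}" by (intro card_mono) auto
    hence "genus S \<le> F + 1" by (simp add: genus_def)
    moreover have "F \<notin> UNIV - S \<or> True" by simp
    show ?thesis
    proof -
      have "UNIV - S \<subseteq> {1..F}"
      proof
        fix x assume x: "x \<in> UNIV - S"
        have "x \<le> F" using x \<open>UNIV - S \<subseteq> {..F}\<close> by auto
        moreover have "x \<noteq> 0" using x that unfolding Sat_def saturated_def numerical_semigroup_def by auto
        ultimately show "x \<in> {1..F}" by auto
      qed
      hence "card (UNIV - S) \<le> card {1..F}" by (intro card_mono) auto
      thus ?thesis by (simp add: genus_def)
    qed
  qed
  have fin: "finite (genus ` Sat F)" by (rule finite_subset[of _ "{..F}"]) (use gb in auto)
  show ?thesis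
  proof (rule Min_eqI[OF fin])
    fix y assume "y \<in> genus ` Sat F"
    then obtain S where "S \<in> Sat F" "y = genus S" by auto
    thus "F - F div p \<le> y" using lower[of F p S] pl pp by auto
  next
    show "F - F div p \<in> genus ` Sat F" using u by (metis image_eqI)
  qed
qed

end
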